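(* There is a one-to-one correspondence between triples of lifted partial permutations of the form $(\tilde S,\tilde f)$, $(\tilde T,\tilde g)$, $(\tilde S,\tilde g\circ\tilde f)$ with $\tilde T=\tilde f(\tilde S)$, and triangularly connected triples of Heegaard states $\mathbf x\in\mathfrak S(\mathcal H_{\alpha\beta})$, $\mathbf y\in\mathfrak S(\mathcal H_{\beta\gamma})$, $\mathbf z\in\mathfrak S(\mathcal H_{\alpha\gamma})$ (where $\mathbf x,\mathbf y,\mathbf z$ correspond to $\tilde f$, $\tilde g$, $\tilde g\circ\tilde f$ respectively). Moreover, if $\psi\in D(\mathbf x,\mathbf y,\mathbf z)$ is the domain connecting them, then for each $i=1,\dots,m$, $$w_i(\tilde f)+w_i(\tilde g)=w_i(\tilde g\circ\tilde f)+n_{O_i}(\psi),$$ where $n_{O_i}(\psi)$ is the local multiplicity of $\psi$ at $O_i$.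
   Context: Fix $0<k<m$. $G_m$ is the group of isometries of $\mathbb R$ generated by $x\mapsto1-x$, $x\mapsto2m-1-x$; $Q_2(j-\frac12)$ is the unique $i\in\{1,\dots,m\}$ with $i\equiv j$ or $i\equiv 2-j\pmod{2m-2}$. A lifted partial permutation on $k$ letters is a pair $(\tilde S,\tilde f)$ with $\tilde S\subset\mathbb Z$ $G_m$-invariant, $|\tilde S/G_m|=k$, $\tilde f:\tilde S\to\mathbb Z$ $G_m$-equivariant with injective induced map $\tilde S/G_m\to\mathbb Z/G_m$; $w_j(\tilde f)=\tfrac12\#\{i\in\tilde S: i<j-\tfrac12<\tilde f(i)\text{ or } i>j-\tfrac12>\tilde f(i)\}$. Heegaard triple: in $\mathbb R^2$ with punctures $O_{Q_2(i+1/2)}$ at $(i+\frac12,i+\frac12)$ and $\mathbb G_m$ generated by the $180^\circ$ rotations about $(\frac12,\frac12)$ and $(m-\frac12,m-\frac12)$, take lines $\tilde\alpha_\ell=\{\ell\}\times\mathbb R$, $\tilde\gamma_\ell=\mathbb R\times\{\ell\}$, and a $\mathbb G_m$-invariant family of lines $\tilde\beta_\ell$ ($\ell\in\mathbb Z$) of slope $-1$, with $\tilde\beta_\ell$ crossing the diagonal between $(\ell-\frac12,\ell-\frac12)$ and $(\ell+\frac12,\ell+\frac12)$, and no triple intersection among an $\tilde\alpha$-line, a $\tilde\beta$-line and the diagonal. $\mathcal H=\mathbb R^2/\mathbb G_m$ with the image curves. A Heegaard state for $\mathcal H_{\alpha\beta}$ corresponds to $(\tilde S,\tilde f)$ via its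 lift $\bigcup_{s\in\tilde S}\tilde\alpha_s\cap\tilde\beta_{\tilde f(s)}$; similarly states of $\mathcal H_{\beta\gamma}$ via $\bigcup_t\tilde\beta_t\cap\tilde\gamma_{\tilde g(t)}$ and of $\mathcal H_{\alpha\gamma}$ via $\bigcup_s\tilde\alpha_s\cap\tilde\gamma_{\tilde h(s)}$. States $\mathbf x,\mathbf y,\mathbf z$ are triangularly connected if their $\mathbb G_m$-equivariant lifts $\tilde{\mathbf x},\tilde{\mathbf y},\tilde{\mathbf z}$ admit $k$ triangles in $\mathbb R^2$ with sides on $\tilde\alpha$, $\tilde\beta$, $\tilde\gamma$ lines in counterclockwise order, whose $\mathbb G_m$-orbits have corners exactly at $\tilde{\mathbf x},\tilde{\mathbf y},\tilde{\mathbf z}$; the quotient of these triangles is a two-chain $\psi\in D(\mathbf x,\mathbf y,\mathbf z)$ (two-chains with $\mathbf x$ as initial $\alpha\beta$ corners, $\mathbf y$ initial $\beta\gamma$ corners, $\mathbf z$ terminal $\alpha\gamma$ corners). *)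

theory Defs
  imports "HOL-Analysis.Analysis"
begin

inductive_set GZ :: "nat \<Rightarrow> (int \<Rightarrow> int) set" for m :: nat where
  GZ_id: "id \<in> GZ m"
| GZ_r1: "g \<in> GZ m \<Longrightarrow> (\<lambda>x. 1 - x) \<circ> g \<in> GZ m"
| GZ_r2: "g \<in> GZ m \<Longrightarrow> (\<lambda>x. 2 * int m - 1 - x) \<circ> g \<in> GZ m"

definition Gorbit :: "nat \<Rightarrow> int \<Rightarrow> int set" where
  "Gorbit m x = (\<lambda>g. g x) ` GZ m"

section \<open>Lifted partial permutations (S,f) represented as partial maps with dom f = S\<close>

definition LPP :: "nat \<Rightarrow> nat \<Rightarrow> (int \<Rightarrow> int option) \<Rightarrow> bool" where
  "LPP m k f \<longleftrightarrow>
     (\<forall>g\<in>GZ m. \<forall>x\<in>dom f. g x \<in> dom f) \<and>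
     card (Gorbit m ` dom f) = k \<and>
     (\<forall>g\<in>GZ m. \<forall>x\<in>dom f. f (g x) = map_option g (f x)) \<and>
     (\<forall>x\<in>dom f. \<forall>y\<in>dom f.
        Gorbit m (the (f x)) = Gorbit m (the (f y)) \<longrightarrow> Gorbit m x = Gorbit m y)"

definition wt :: "int \<Rightarrow> (int \<Rightarrow> int option) \<Rightarrow> real" where
  "wt j f = real (card {i\<in>dom f.
      (real_of_int i < real_of_int j - 1/2 \<and> real_of_int j - 1/2 < real_of_int (the (f i))) \<or>
      (real_of_int i > real_of_int j - 1/2 \<and> real_of_int j - 1/2 > real_of_int (the (f i)))}) / 2"

definition alphaL :: "int \<Rightarrow> (real \<times> real) set" where
  "alphaL l = {p. fst p = real_of_int l}"

definition gammaL :: "int \<Rightarrow> (real \<times> real) set" where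
  "gammaL l = {p. snd p = real_of_int l}"

definition betaL :: "(int \<Rightarrow> real) \<Rightarrow> int \<Rightarrow> (real \<times> real) set" where
  "betaL c l = {p. fst p + snd p = c l}"

inductive_set GR :: "nat \<Rightarrow> (real \<times> real \<Rightarrow> real \<times> real) set" for m :: nat where
  GR_id: "id \<in> GR m"
| GR_r1: "g \<in> GR m \<Longrightarrow> (\<lambda>p. (1 - fst p, 1 - snd p)) \<circ> g \<in> GR m"
| GR_r2: "g \<in> GR m \<Longrightarrow>
     (\<lambda>p. (2 * real m - 1 - fst p, 2 * real m - 1 - snd p)) \<circ> g \<in> GR m"

definition liftAB :: "(int \<Rightarrow> real) \<Rightarrow> (int \<Rightarrow> int option) \<Rightarrow> (real \<times> real) set" where
  "liftAB c f = (\<Union>s\<in>dom f. alphaL s \<inter> betaL c (the (f s)))"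

definition liftBG :: "(int \<Rightarrow> real) \<Rightarrow> (int \<Rightarrow> int option) \<Rightarrow> (real \<times> real) set" where
  "liftBG c g = (\<Union>t\<in>dom g. betaL c t \<inter> gammaL (the (g t)))"

definition liftAG :: "(int \<Rightarrow> int option) \<Rightarrow> (real \<times> real) set" where
  "liftAG h = (\<Union>s\<in>dom h. alphaL s \<inter> gammaL (the (h s)))"

definition statesAB :: "nat \<Rightarrow> nat \<Rightarrow> (int \<Rightarrow> real) \<Rightarrow> (real \<times> real) set set" where
  "statesAB m k c = {liftAB c f | f. LPP m k f}"

definition statesBG :: "nat \<Rightarrow> nat \<Rightarrow> (int \<Rightarrow> real) \<Rightarrow> (real \<times> real) set set" where
  "statesBG m k c = {liftBG c g | g. LPP m k g}"

definition statesAG :: "nat \<Rightarrow> nat \<Rightarrow> (real \<times> real) set set" where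
  "statesAG m k = {liftAG h | h. LPP m k h}"

section \<open>Triangles with sides on alpha_s, beta_t, gamma_h\<close>

definition cornerAB :: "(int \<Rightarrow> real) \<Rightarrow> int \<times> int \<times> int \<Rightarrow> real \<times> real" where
  "cornerAB c \<tau> = (case \<tau> of (s, t, h) \<Rightarrow> (real_of_int s, c t - real_of_int s))"

definition cornerBG :: "(int \<Rightarrow> real) \<Rightarrow> int \<times> int \<times> int \<Rightarrow> real \<times> real" where
  "cornerBG c \<tau> = (case \<tau> of (s, t, h) \<Rightarrow> (c t - real_of_int h, real_of_int h))"

definition cornerAG :: "int \<times> int \<times> int \<Rightarrow> real \<times> real" where
  "cornerAG \<tau> = (case \<tau> of (s, t, h) \<Rightarrow> (real_of_int s, real_of_int h))"

definition triRegion :: "(int \<Rightarrow> real) \<Rightarrow> int \<times> int \<times> int \<Rightarrow> (real \<times> real) set" where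
  "triRegion c \<tau> = convex hull {cornerAB c \<tau>, cornerBG c \<tau>, cornerAG \<tau>}"

definition triWitness :: "nat \<Rightarrow> nat \<Rightarrow> (int \<Rightarrow> real) \<Rightarrow> (real \<times> real) set \<Rightarrow>
    (real \<times> real) set \<Rightarrow> (real \<times> real) set \<Rightarrow> (int \<times> int \<times> int) set \<Rightarrow> bool" where
  "triWitness m k c x y z Tri \<longleftrightarrow>
     finite Tri \<and> card Tri = k \<and>
     (\<Union>\<rho>\<in>GR m. \<Union>\<tau>\<in>Tri. {\<rho> (cornerAB c \<tau>)}) = x \<and>
     (\<Union>\<rho>\<in>GR m. \<Union>\<tau>\<in>Tri. {\<rho> (cornerBG c \<tau>)}) = y \<and>
     (\<Union>\<rho>\<in>GR m. \<Union>\<tau>\<in>Tri. {\<rho> (cornerAG \<tau>)}) = z"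

definition triConnected :: "nat \<Rightarrow> nat \<Rightarrow> (int \<Rightarrow> real) \<Rightarrow> (real \<times> real) set \<Rightarrow>
    (real \<times> real) set \<Rightarrow> (real \<times> real) set \<Rightarrow> bool" where
  "triConnected m k c x y z \<longleftrightarrow> (\<exists>Tri. triWitness m k c x y z Tri)"

text \<open>Local multiplicity at O_i of the quotient two-chain psi of the triangles Tri:
  number of pairs (tau, rho) with the lift (i-1/2, i-1/2) of O_i in rho(tau).\<close>
definition multO :: "nat \<Rightarrow> (int \<Rightarrow> real) \<Rightarrow> (int \<times> int \<times> int) set \<Rightarrow> nat \<Rightarrow> nat" where
  "multO m c Tri i = (\<Sum>\<tau>\<in>Tri.
     card {\<rho>\<in>GR m. (real i - 1/2, real i - 1/2) \<in> \<rho> ` triRegion c \<tau>})"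

end

theory Submission
  imports Defs
begin


definition dd :: "nat \<Rightarrow> int" where "dd m = 2 * int m - 2"

definition zact :: "nat \<Rightarrow> bool \<times> int \<Rightarrow> int \<Rightarrow> int" where
  "zact m \<sigma> x = (if fst \<sigma> then 1 - x + snd \<sigma> * dd m else x + snd \<sigma> * dd m)"

definition ract :: "nat \<Rightarrow> bool \<times> int \<Rightarrow> real \<times> real \<Rightarrow> real \<times> real" where
  "ract m \<sigma> p = (if fst \<sigma> then (1 + of_int (snd \<sigma> * dd m) - fst p, 1 + of_int (snd \<sigma> * dd m) - snd p)
                  else (fst p + of_int (snd \<sigma> * dd m), snd p + of_int (snd \<sigma> * dd m)))"

lemma GZ_sub: "GZ m \<subseteq> range (zact m)"
proof
  fix g assume "g \<in> GZ m"
  then show "g \<in> range (zact m)"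
  proof induction
    case GZ_id
    have "id = zact m (False, 0)" by (auto simp: zact_def)
    then show ?case by blast
  next
    case (GZ_r1 g)
    then obtain e a where g: "g = zact m (e, a)" by auto
    show ?case
    proof (cases e)
      case True
      have "(\<lambda>x. 1 - x) \<circ> g = zact m (False, -a)" by (auto simp: g zact_def True)
      then show ?thesis by blast
    next
      case False
      have "(\<lambda>x. 1 - x) \<circ> g = zact m (True, -a)" by (auto simp: g zact_def False)
      then show ?thesis by blast
    qed
  next
    case (GZ_r2 g)
    then obtain e a where g: "g = zact m (e, a)" by auto
    show ?case
    proof (cases e)
      case True
      have "(\<lambda>x. 2 * int m - 1 - x) \<circ> g = zact m (False, 1-a)" by (auto simp: g zact_def dd_def True algebra_simps)
      then show ?thesis by blast
    next
      case False
      have "(\<lambda>x. 2 * int m - 1 - x) \<circ> g = zact m (True, 1-a)" by (auto simp: g zact_def dd_def False algebra_simps)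
      then show ?thesis by blast
    qed
  qed
qed

lemma GZ_trans_nat: "zact m (False, int n) \<in> GZ m \<and> zact m (False, - int n) \<in> GZ m"
proof (induction n)
  case 0
  have "zact m (False, 0) = id" by (rule ext) (simp add: zact_def)
  then have "zact m (False, int 0) = id" "zact m (False, - int 0) = id" by simp_all
  then show ?case by (simp only: GZ.GZ_id simp_thms)
next
  case (Suc n)
  have 1: "zact m (False, int (Suc n)) = (\<lambda>x. 2 * int m - 1 - x) \<circ> ((\<lambda>x. 1 - x) \<circ> zact m (False, int n))"
    by (auto simp: zact_def dd_def algebra_simps)
  have 2: "zact m (False, - int (Suc n)) = (\<lambda>x. 1 - x) \<circ> ((\<lambda>x. 2 * int m - 1 - x) \<circ> zact m (False, - int n))"
    by (auto simp: zact_def dd_def algebra_simps)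
  show ?case unfolding 1 2 using Suc by (intro conjI GZ.GZ_r1 GZ.GZ_r2) auto
qed

lemma GZ_trans: "zact m (False, a) \<in> GZ m"
proof (cases "a \<ge> 0")
  case True
  then have "a = int (nat a)" by simp
  then show ?thesis using GZ_trans_nat[of m "nat a"] by metis
next
  case False
  then have "a = - int (nat (-a))" by simp
  then show ?thesis using GZ_trans_nat[of m "nat (-a)"] by metis
qed

lemma GZ_char: "GZ m = range (zact m)"
proof
  show "range (zact m) \<subseteq> GZ m"
  proof clarify
    fix e a
    show "zact m (e, a) \<in> GZ m"
    proof (cases e)
      case True
      have "zact m (e, a) = (\<lambda>x. 1 - x) \<circ> zact m (False, -a)" by (auto simp: zact_def True)
      then show ?thesis using GZ_trans GZ.GZ_r1 by metis
    qed (use GZ_trans in auto)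
  qed
qed (rule GZ_sub)

lemma GR_sub: "GR m \<subseteq> range (ract m)"
proof
  fix g assume "g \<in> GR m"
  then show "g \<in> range (ract m)"
  proof induction
    case GR_id
    have "id = ract m (False, 0)" by (rule ext) (simp add: ract_def)
    then show ?case by blast
  next
    case (GR_r1 g)
    then obtain e a where g: "g = ract m (e, a)" by auto
    show ?case
    proof (cases e)
      case True
      have "(\<lambda>p. (1 - fst p, 1 - snd p)) \<circ> g = ract m (False, -a)" by (rule ext) (simp add: g ract_def True)
      then show ?thesis by blast
    next
      case False
      have "(\<lambda>p. (1 - fst p, 1 - snd p)) \<circ> g = ract m (True, -a)" by (rule ext) (simp add: g ract_def False)
      then show ?thesis by blast
    qed
  next
    case (GR_r2 g)
    then obtain e a where g: "g = ract m (e, a)" by auto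
    show ?case
    proof (cases e)
      case True
      have "(\<lambda>p. (2 * real m - 1 - fst p, 2 * real m - 1 - snd p)) \<circ> g = ract m (False, 1-a)" by (rule ext) (simp add: g ract_def dd_def True algebra_simps)
      then show ?thesis by blast
    next
      case False
      have "(\<lambda>p. (2 * real m - 1 - fst p, 2 * real m - 1 - snd p)) \<circ> g = ract m (True, 1-a)" by (rule ext) (simp add: g ract_def dd_def False algebra_simps)
      then show ?thesis by blast
    qed
  qed
qed

lemma GR_trans_nat: "ract m (False, int n) \<in> GR m \<and> ract m (False, - int n) \<in> GR m"
proof (induction n)
  case 0
  have "ract m (False, 0) = id" by (rule ext) (simp add: ract_def)
  then have "ract m (False, int 0) = id" "ract m (False, - int 0) = id" by simp_all
  then show ?case by (simp only: GR.GR_id simp_thms)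
next
  case (Suc n)
  have 1: "ract m (False, int (Suc n)) = (\<lambda>p. (2 * real m - 1 - fst p, 2 * real m - 1 - snd p)) \<circ> ((\<lambda>p. (1 - fst p, 1 - snd p)) \<circ> ract m (False, int n))"
    by (rule ext) (simp add: ract_def dd_def algebra_simps)
  have 2: "ract m (False, - int (Suc n)) = (\<lambda>p. (1 - fst p, 1 - snd p)) \<circ> ((\<lambda>p. (2 * real m - 1 - fst p, 2 * real m - 1 - snd p)) \<circ> ract m (False, - int n))"
    by (rule ext) (simp add: ract_def dd_def algebra_simps)
  show ?case unfolding 1 2 using Suc by (intro conjI GR.GR_r1 GR.GR_r2) auto
qed

lemma GR_trans: "ract m (False, a) \<in> GR m"
proof (cases "a \<ge> 0")
  case True
  then have "a = int (nat a)" by simp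
  then show ?thesis using GR_trans_nat[of m "nat a"] by metis
next
  case False
  then have "a = - int (nat (-a))" by simp
  then show ?thesis using GR_trans_nat[of m "nat (-a)"] by metis
qed

lemma GR_char: "GR m = range (ract m)"
proof
  show "range (ract m) \<subseteq> GR m"
  proof clarify
    fix e a
    show "ract m (e, a) \<in> GR m"
    proof (cases e)
      case True
      have "ract m (e, a) = (\<lambda>p. (1 - fst p, 1 - snd p)) \<circ> ract m (False, -a)" by (rule ext) (simp add: ract_def True)
      then show ?thesis using GR_trans GR.GR_r1 by metis
    qed (use GR_trans in auto)
  qed
qed (rule GR_sub)


definition rz :: "nat \<Rightarrow> bool \<times> int \<Rightarrow> real \<Rightarrow> real" where
  "rz m \<sigma> r = (if fst \<sigma> then 1 + of_int (snd \<sigma> * dd m) - r else r + of_int (snd \<sigma> * dd m))"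

lemma ract_rz: "ract m \<sigma> p = (rz m \<sigma> (fst p), rz m \<sigma> (snd p))"
  by (simp add: ract_def rz_def)

lemma rz_of_int: "rz m \<sigma> (of_int x) = of_int (zact m \<sigma> x)"
  by (simp add: rz_def zact_def)

definition zcomp :: "bool \<times> int \<Rightarrow> bool \<times> int \<Rightarrow> bool \<times> int" where
  "zcomp \<sigma> \<tau> = (if fst \<sigma> then (\<not> fst \<tau>, snd \<sigma> - snd \<tau>) else (fst \<tau>, snd \<sigma> + snd \<tau>))"

definition zinv :: "bool \<times> int \<Rightarrow> bool \<times> int" where
  "zinv \<sigma> = (if fst \<sigma> then \<sigma> else (False, - snd \<sigma>))"

lemma zact_comp: "zact m \<sigma> (zact m \<tau> x) = zact m (zcomp \<sigma> \<tau>) x"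
  by (cases \<sigma>; cases \<tau>) (auto simp: zact_def zcomp_def algebra_simps)

lemma zact_inv: "zact m (zinv \<sigma>) (zact m \<sigma> x) = x"
  by (cases \<sigma>) (auto simp: zact_def zinv_def algebra_simps)

lemma zact_id: "zact m (False, 0) x = x"
  by (simp add: zact_def)

lemma zact_dist: "\<bar>zact m \<sigma> x - zact m \<sigma> y\<bar> = \<bar>x - y\<bar>"
  by (auto simp: zact_def)

lemma zact_inj:
  assumes "2 \<le> m" and "zact m \<sigma> x = zact m \<tau> x"
  shows "\<sigma> = \<tau>"
proof -
  obtain e a f b where s: "\<sigma> = (e, a)" and t: "\<tau> = (f, b)" by (cases \<sigma>; cases \<tau>)
  have d: "dd m = 2 * (int m - 1)" "int m - 1 > 0" using assms(1) by (auto simp: dd_def)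
  show ?thesis
  proof (cases "e = f")
    case True
    then have "a * dd m = b * dd m" using assms(2) by (auto simp: zact_def s t)
    then show ?thesis using d True s t by auto
  next
    case False
    then have "1 - x + a * dd m = x + b * dd m \<or> x + a * dd m = 1 - x + b * dd m"
      using assms(2) by (cases e; cases f) (auto simp: zact_def s t)
    then have "1 = 2 * (x + (b - a) * (int m - 1)) \<or> 1 = 2 * (x + (a - b) * (int m - 1))"
      using d by (auto simp: algebra_simps)
    then show ?thesis by (metis dvd_triv_left odd_one)
  qed
qed

lemma Gorbit_char: "Gorbit m x = range (\<lambda>\<sigma>. zact m \<sigma> x)"
  by (auto simp: Gorbit_def GZ_char)

lemma Gorbit_zact: "Gorbit m (zact m \<sigma> x) = Gorbit m x"
proof
  show "Gorbit m (zact m \<sigma> x) \<subseteq> Gorbit m x"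
    by (auto simp: Gorbit_char zact_comp)
  show "Gorbit m x \<subseteq> Gorbit m (zact m \<sigma> x)"
  proof
    fix y assume "y \<in> Gorbit m x"
    then obtain \<tau> where "y = zact m \<tau> x" by (auto simp: Gorbit_char)
    then have "y = zact m \<tau> (zact m (zinv \<sigma>) (zact m \<sigma> x))" by (simp add: zact_inv)
    also have "\<dots> = zact m (zcomp \<tau> (zinv \<sigma>)) (zact m \<sigma> x)" by (rule zact_comp)
    finally have "y = (\<lambda>\<rho>. zact m \<rho> (zact m \<sigma> x)) (zcomp \<tau> (zinv \<sigma>))" by simp
    then show "y \<in> Gorbit m (zact m \<sigma> x)" unfolding Gorbit_char by blast
  qed
qed

lemma Gorbit_self: "x \<in> Gorbit m x"
  unfolding Gorbit_char using zact_id[of m x] by (metis rangeI)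

lemma Gorbit_eq_iff: "Gorbit m y = Gorbit m x \<longleftrightarrow> (\<exists>\<sigma>. y = zact m \<sigma> x)"
  by (metis Gorbit_self Gorbit_zact Gorbit_char rangeE)

lemma ract_inj: "2 \<le> m \<Longrightarrow> ract m \<sigma> = ract m \<tau> \<Longrightarrow> \<sigma> = \<tau>"
proof -
  assume "2 \<le> m" "ract m \<sigma> = ract m \<tau>"
  then have "rz m \<sigma> (of_int 0) = rz m \<tau> (of_int 0)" by (metis ract_rz fst_conv)
  then have "zact m \<sigma> 0 = zact m \<tau> 0" by (simp only: rz_of_int of_int_eq_iff)
  then show ?thesis using zact_inj \<open>2 \<le> m\<close> by blast
qed

lemma interval_uniq:
  fixes l l' :: int and v :: real
  assumes "2 * real_of_int l - 1 < v" "v < 2 * real_of_int l + 1"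
    "2 * real_of_int l' - 1 < v" "v < 2 * real_of_int l' + 1"
  shows "l = l'"
proof -
  have "real_of_int l < real_of_int l' + 1" "real_of_int l' < real_of_int l + 1" using assms by linarith+
  then have "l < l' + 1" "l' < l + 1" by linarith+
  then show ?thesis by linarith
qed


definition act3 :: "nat \<Rightarrow> bool \<times> int \<Rightarrow> int \<times> int \<times> int \<Rightarrow> int \<times> int \<times> int" where
  "act3 m \<sigma> \<tau> = (case \<tau> of (s, t, h) \<Rightarrow> (zact m \<sigma> s, zact m \<sigma> t, zact m \<sigma> h))"

definition rz2 :: "nat \<Rightarrow> bool \<times> int \<Rightarrow> real \<Rightarrow> real" where
  "rz2 m \<sigma> r = (if fst \<sigma> then 2 + 2 * of_int (snd \<sigma> * dd m) - r else r + 2 * of_int (snd \<sigma> * dd m))"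

lemma rz_sub: "rz m \<sigma> (v - w) = rz2 m \<sigma> v - rz m \<sigma> w"
  by (simp add: rz_def rz2_def)

lemma rz_add: "rz m \<sigma> v + rz m \<sigma> w = rz2 m \<sigma> (v + w)"
  by (simp add: rz_def rz2_def)

lemma alpha_beta: "alphaL s \<inter> betaL c l = {(real_of_int s, c l - real_of_int s)}"
  by (auto simp: alphaL_def betaL_def)

lemma beta_gamma: "betaL c t \<inter> gammaL h = {(c t - real_of_int h, real_of_int h)}"
  by (auto simp: gammaL_def betaL_def)

lemma alpha_gamma: "alphaL s \<inter> gammaL h = {(real_of_int s, real_of_int h)}"
  by (auto simp: gammaL_def alphaL_def)

lemma liftAB_eq: "liftAB c f = (\<lambda>s. (real_of_int s, c (the (f s)) - real_of_int s)) ` dom f"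
  by (auto simp: liftAB_def alpha_beta)

lemma liftBG_eq: "liftBG c g = (\<lambda>t. (c t - real_of_int (the (g t)), real_of_int (the (g t)))) ` dom g"
  by (auto simp: liftBG_def beta_gamma)

lemma liftAG_eq: "liftAG h = (\<lambda>s. (real_of_int s, real_of_int (the (h s)))) ` dom h"
  by (auto simp: liftAG_def alpha_gamma)

locale setting =
  fixes m :: nat and c :: "int \<Rightarrow> real"
  assumes m2: "2 \<le> m"
    and beta_diag: "\<forall>l. 2 * real_of_int l - 1 < c l \<and> c l < 2 * real_of_int l + 1"
    and beta_generic: "\<forall>s l. c l \<noteq> 2 * real_of_int s"
    and beta_inv: "\<forall>\<rho>\<in>GR m. \<forall>l. \<exists>l'. \<rho> ` betaL c l = betaL c l'"
begin

lemma c_inj: "c l = c l' \<Longrightarrow> l = l'"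
  using beta_diag interval_uniq by metis

lemma c_equiv: "c (zact m \<sigma> t) = rz2 m \<sigma> (c t)"
proof -
  have "ract m \<sigma> \<in> GR m" by (simp add: GR_char)
  then obtain l' where l': "ract m \<sigma> ` betaL c t = betaL c l'" using beta_inv by blast
  have "(c t, 0) \<in> betaL c t" by (simp add: betaL_def)
  then have "ract m \<sigma> (c t, 0) \<in> betaL c l'" using l' by blast
  then have "rz m \<sigma> (c t) + rz m \<sigma> 0 = c l'" by (simp add: betaL_def ract_rz)
  then have eq: "rz2 m \<sigma> (c t) = c l'" by (simp add: rz_add)
  have "2 * real_of_int (zact m \<sigma> t) - 1 < rz2 m \<sigma> (c t) \<and> rz2 m \<sigma> (c t) < 2 * real_of_int (zact m \<sigma> t) + 1"
    using beta_diag[rule_format, of t] by (auto simp: rz2_def zact_def)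
  then have "l' = zact m \<sigma> t" using beta_diag[rule_format, of l'] eq interval_uniq by metis
  then show ?thesis using eq by simp
qed

lemma cornerAB_equiv: "ract m \<sigma> (cornerAB c \<tau>) = cornerAB c (act3 m \<sigma> \<tau>)"
  by (cases \<tau>) (auto simp: cornerAB_def act3_def ract_rz rz_sub c_equiv rz_of_int)

lemma cornerBG_equiv: "ract m \<sigma> (cornerBG c \<tau>) = cornerBG c (act3 m \<sigma> \<tau>)"
  by (cases \<tau>) (auto simp: cornerBG_def act3_def ract_rz rz_sub c_equiv rz_of_int)

lemma cornerAG_equiv: "ract m \<sigma> (cornerAG \<tau>) = cornerAG (act3 m \<sigma> \<tau>)"
  by (cases \<tau>) (auto simp: cornerAG_def act3_def ract_rz rz_of_int)

end


lemma LPP_equiv: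
  assumes "LPP m k f" "s \<in> dom f"
  shows "zact m \<sigma> s \<in> dom f" "f (zact m \<sigma> s) = Some (zact m \<sigma> (the (f s)))"
proof -
  have g: "zact m \<sigma> \<in> GZ m" by (simp add: GZ_char)
  show "zact m \<sigma> s \<in> dom f" using assms g unfolding LPP_def by blast
  have "f (zact m \<sigma> s) = map_option (zact m \<sigma>) (f s)" using assms g unfolding LPP_def by blast
  then show "f (zact m \<sigma> s) = Some (zact m \<sigma> (the (f s)))" using assms(2) by auto
qed

lemma unionGR:
  assumes "\<And>\<sigma> \<tau>. ract m \<sigma> (F \<tau>) = G (act3 m \<sigma> \<tau>)"
  shows "(\<Union>\<rho>\<in>GR m. \<Union>\<tau>\<in>Tri. {\<rho> (F \<tau>)}) = G ` {act3 m \<sigma> \<tau> | \<sigma> \<tau>. \<tau> \<in> Tri}"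
proof -
  have "(\<Union>\<rho>\<in>range (ract m). \<Union>\<tau>\<in>Tri. {\<rho> (F \<tau>)}) = (\<Union>\<sigma>. \<Union>\<tau>\<in>Tri. {G (act3 m \<sigma> \<tau>)})"
    by (simp add: assms)
  also have "\<dots> = {G (act3 m \<sigma> \<tau>) | \<sigma> \<tau>. \<tau> \<in> Tri}" by blast
  finally have "(\<Union>\<rho>\<in>range (ract m). \<Union>\<tau>\<in>Tri. {\<rho> (F \<tau>)}) = {G (act3 m \<sigma> \<tau>) | \<sigma> \<tau>. \<tau> \<in> Tri}" .
  then show ?thesis unfolding GR_char by blast
qed

context setting
begin

lemma memAB: "cornerAB c (s, t, h) \<in> liftAB c f \<longleftrightarrow> f s = Some t"
proof
  assume "cornerAB c (s, t, h) \<in> liftAB c f"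
  then have "\<exists>s'\<in>dom f. (real_of_int s, c t - real_of_int s) = (real_of_int s', c (the (f s')) - real_of_int s')"
    by (simp add: liftAB_eq cornerAB_def image_iff)
  then have "s \<in> dom f \<and> c t = c (the (f s))" by auto
  then show "f s = Some t" using c_inj by force
next
  assume "f s = Some t"
  then show "cornerAB c (s, t, h) \<in> liftAB c f" by (force simp: liftAB_eq cornerAB_def)
qed

lemma memBG: "cornerBG c (s, t, h) \<in> liftBG c g \<longleftrightarrow> g t = Some h"
proof
  assume "cornerBG c (s, t, h) \<in> liftBG c g"
  then have "\<exists>t'\<in>dom g. (c t - real_of_int h, real_of_int h) = (c t' - real_of_int (the (g t')), real_of_int (the (g t')))"
    by (simp add: liftBG_eq cornerBG_def image_iff)
  then obtain t' where t': "t' \<in> dom g" "(c t - real_of_int h, real_of_int h) = (c t' - real_of_int (the (g t')), real_of_int (the (g t')))"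
    by blast
  then have "h = the (g t')" "c t = c t'" by auto
  then show "g t = Some h" using c_inj t'(1) by force
next
  assume "g t = Some h"
  then show "cornerBG c (s, t, h) \<in> liftBG c g" by (force simp: liftBG_eq cornerBG_def)
qed

lemma memAG: "cornerAG (s, t, h) \<in> liftAG H \<longleftrightarrow> H s = Some h"
  by (force simp: liftAG_eq cornerAG_def)

definition TTof :: "(int \<times> int \<times> int) set \<Rightarrow> (int \<times> int \<times> int) set" where
  "TTof Tri = {act3 m \<sigma> \<tau> | \<sigma> \<tau>. \<tau> \<in> Tri}"

lemma witness_TT:
  assumes "triWitness m k c x y z Tri"
  shows "x = cornerAB c ` TTof Tri" "y = cornerBG c ` TTof Tri" "z = cornerAG ` TTof Tri"
  using assms unfolding triWitness_def TTof_def
  using unionGR[where F="cornerAB c" and G="cornerAB c" and Tri=Tri] unionGR[where F="cornerBG c" and G="cornerBG c" and Tri=Tri]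
    unionGR[where F="cornerAG" and G="cornerAG" and Tri=Tri] cornerAB_equiv cornerBG_equiv cornerAG_equiv
  by auto

lemma witness_props:
  assumes W: "triWitness m k c (liftAB c f) (liftBG c g) (liftAG H) Tri"
  shows "\<And>s t h. (s, t, h) \<in> TTof Tri \<Longrightarrow> f s = Some t \<and> g t = Some h \<and> H s = Some h"
    and "\<And>s t. f s = Some t \<Longrightarrow> \<exists>h. (s, t, h) \<in> TTof Tri"
    and "\<And>t h. g t = Some h \<Longrightarrow> \<exists>s. (s, t, h) \<in> TTof Tri"
    and "\<And>s h. H s = Some h \<Longrightarrow> \<exists>t. (s, t, h) \<in> TTof Tri"
proof -
  fix s t h assume "(s, t, h) \<in> TTof Tri"
  then show "f s = Some t \<and> g t = Some h \<and> H s = Some h"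
    using witness_TT[OF W] memAB memBG memAG by (metis image_eqI)
next
  fix s t assume "f s = Some t"
  then have "cornerAB c (s, t, 0) \<in> cornerAB c ` TTof Tri" using witness_TT[OF W] memAB by metis
  then obtain s' t' h' where "(s', t', h') \<in> TTof Tri" "cornerAB c (s, t, 0) = cornerAB c (s', t', h')"
    by (metis imageE prod_cases3)
  moreover from this(2) have "s = s'" "c t = c t'" by (auto simp: cornerAB_def)
  ultimately show "\<exists>h. (s, t, h) \<in> TTof Tri" using c_inj by metis
next
  fix t h assume "g t = Some h"
  then have "cornerBG c (0, t, h) \<in> cornerBG c ` TTof Tri" using witness_TT[OF W] memBG by metis
  then obtain s' t' h' where "(s', t', h') \<in> TTof Tri" "cornerBG c (0, t, h) = cornerBG c (s', t', h')"
    by (metis imageE prod_cases3)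
  moreover from this(2) have "h = h'" "c t = c t'" by (auto simp: cornerBG_def)
  ultimately show "\<exists>s. (s, t, h) \<in> TTof Tri" using c_inj by metis
next
  fix s h assume "H s = Some h"
  then have "cornerAG (s, 0, h) \<in> cornerAG ` TTof Tri" using witness_TT[OF W] memAG by metis
  then obtain s' t' h' where "(s', t', h') \<in> TTof Tri" "cornerAG (s, 0, h) = cornerAG (s', t', h')"
    by (metis imageE prod_cases3)
  then show "\<exists>t. (s, t, h) \<in> TTof Tri" by (auto simp: cornerAG_def)
qed

lemma witness_comp:
  assumes W: "triWitness m k c (liftAB c f) (liftBG c g) (liftAG H) Tri"
  shows "dom g = ran f" "H = g \<circ>\<^sub>m f"
proof -
  note p = witness_props[OF W]
  show "dom g = ran f"
  proof
    show "dom g \<subseteq> ran f"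
    proof
      fix t assume "t \<in> dom g"
      then obtain h where "g t = Some h" by auto
      then obtain s where "(s, t, h) \<in> TTof Tri" using p(3) by blast
      then have "f s = Some t" using p(1) by blast
      then show "t \<in> ran f" by (auto simp: ran_def)
    qed
    show "ran f \<subseteq> dom g"
    proof
      fix t assume "t \<in> ran f"
      then obtain s where "f s = Some t" by (auto simp: ran_def)
      then obtain h where "(s, t, h) \<in> TTof Tri" using p(2) by blast
      then have "g t = Some h" using p(1) by blast
      then show "t \<in> dom g" by auto
    qed
  qed
  show "H = g \<circ>\<^sub>m f"
  proof
    fix s
    show "H s = (g \<circ>\<^sub>m f) s"
    proof (cases "f s")
      case None
      then have "H s = None" using p(4,1) by (metis not_None_eq option.distinct(1))
      then show ?thesis using None by simp
    next
      case (Some t)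
      then obtain h where "(s, t, h) \<in> TTof Tri" using p(2) by blast
      then show ?thesis using p(1) Some by auto
    qed
  qed
qed

end


definition tri :: "(int \<Rightarrow> int option) \<Rightarrow> (int \<Rightarrow> int option) \<Rightarrow> int \<Rightarrow> int \<times> int \<times> int" where
  "tri f g s = (s, the (f s), the (g (the (f s))))"

locale setting2 = setting +
  fixes k :: nat and f g :: "int \<Rightarrow> int option"
  assumes kpos: "0 < k" and Lf: "LPP m k f" and Lg: "LPP m k g" and dg: "dom g = ran f"
begin

lemma fdom_g: "s \<in> dom f \<Longrightarrow> the (f s) \<in> dom g"
  using dg by (auto simp: ran_def)

lemma tri_equiv: "s \<in> dom f \<Longrightarrow> act3 m \<sigma> (tri f g s) = tri f g (zact m \<sigma> s)"
  using LPP_equiv[OF Lf] LPP_equiv[OF Lg] fdom_g by (simp add: act3_def tri_def)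

lemma TT_tri:
  assumes "R \<subseteq> dom f" "\<forall>s\<in>dom f. \<exists>\<sigma>. \<exists>r\<in>R. s = zact m \<sigma> r"
  shows "TTof (tri f g ` R) = tri f g ` dom f"
proof
  show "TTof (tri f g ` R) \<subseteq> tri f g ` dom f"
  proof
    fix x assume "x \<in> TTof (tri f g ` R)"
    then obtain \<sigma> r where r: "r \<in> R" "x = act3 m \<sigma> (tri f g r)" by (auto simp: TTof_def)
    then have "r \<in> dom f" using assms(1) by blast
    then have "x = tri f g (zact m \<sigma> r)" "zact m \<sigma> r \<in> dom f" using r tri_equiv LPP_equiv(1)[OF Lf] by auto
    then show "x \<in> tri f g ` dom f" by blast
  qed
  show "tri f g ` dom f \<subseteq> TTof (tri f g ` R)"
  proof
    fix x assume "x \<in> tri f g ` dom f"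
    then obtain s where s: "s \<in> dom f" "x = tri f g s" by blast
    then obtain \<sigma> r where r: "r \<in> R" "s = zact m \<sigma> r" using assms(2) by blast
    moreover have "r \<in> dom f" using r(1) assms(1) by blast
    ultimately have "x = act3 m \<sigma> (tri f g r)" using s tri_equiv by metis
    then show "x \<in> TTof (tri f g ` R)" using r(1) unfolding TTof_def by blast
  qed
qed

lemma dom_comp: "dom (g \<circ>\<^sub>m f) = dom f"
proof
  show "dom (g \<circ>\<^sub>m f) \<subseteq> dom f" by (auto simp: map_comp_def split: option.splits)
  show "dom f \<subseteq> dom (g \<circ>\<^sub>m f)"
  proof
    fix s assume s: "s \<in> dom f"
    then obtain t where t: "f s = Some t" by auto
    then have "t \<in> dom g" using fdom_g[OF s] by simp
    then show "s \<in> dom (g \<circ>\<^sub>m f)" using t by (auto simp: map_comp_def)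
  qed
qed

lemma lifts:
  "liftAB c f = cornerAB c ` tri f g ` dom f"
  "liftBG c g = cornerBG c ` tri f g ` dom f"
  "liftAG (g \<circ>\<^sub>m f) = cornerAG ` tri f g ` dom f"
proof -
  show "liftAB c f = cornerAB c ` tri f g ` dom f"
    by (auto simp: liftAB_eq cornerAB_def tri_def image_image)
  have "dom g = (\<lambda>s. the (f s)) ` dom f" using dg by (force simp: ran_def)
  then show "liftBG c g = cornerBG c ` tri f g ` dom f"
    by (simp add: liftBG_eq cornerBG_def tri_def image_image)
  have "\<And>s. s \<in> dom f \<Longrightarrow> (g \<circ>\<^sub>m f) s = g (the (f s))" by (auto simp: map_comp_def)
  then show "liftAG (g \<circ>\<^sub>m f) = cornerAG ` tri f g ` dom f"
    by (simp add: liftAG_eq cornerAG_def tri_def image_image dom_comp)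
qed

definition rep :: "int set \<Rightarrow> int" where
  "rep Ob = (SOME s. s \<in> dom f \<and> Gorbit m s = Ob)"

definition Reps :: "int set" where
  "Reps = rep ` (Gorbit m ` dom f)"

lemma rep_prop: "Ob \<in> Gorbit m ` dom f \<Longrightarrow> rep Ob \<in> dom f \<and> Gorbit m (rep Ob) = Ob"
  unfolding rep_def by (rule someI_ex) blast

lemma orbits_fin: "finite (Gorbit m ` dom f)" "card (Gorbit m ` dom f) = k"
proof -
  show c: "card (Gorbit m ` dom f) = k" using Lf unfolding LPP_def by blast
  show "finite (Gorbit m ` dom f)" using c kpos card_ge_0_finite by blast
qed

lemma Reps_sub: "Reps \<subseteq> dom f"
  using rep_prop by (auto simp: Reps_def)

lemma Reps_cover: "\<forall>s\<in>dom f. \<exists>\<sigma>. \<exists>r\<in>Reps. s = zact m \<sigma> r"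
proof
  fix s assume s: "s \<in> dom f"
  then have "rep (Gorbit m s) \<in> Reps" "Gorbit m (rep (Gorbit m s)) = Gorbit m s"
    using rep_prop by (auto simp: Reps_def)
  then show "\<exists>\<sigma>. \<exists>r\<in>Reps. s = zact m \<sigma> r" using Gorbit_eq_iff by metis
qed

lemma Reps_card: "finite Reps" "card Reps = k"
proof -
  have "inj_on rep (Gorbit m ` dom f)" using rep_prop by (metis inj_onI)
  then show "card Reps = k" "finite Reps" using orbits_fin unfolding Reps_def by (simp_all add: card_image)
qed

lemma tri_inj: "inj_on (tri f g) A"
  by (rule inj_onI) (simp add: tri_def)

lemma forward: "triConnected m k c (liftAB c f) (liftBG c g) (liftAG (g \<circ>\<^sub>m f))"
proof -
  have TT: "TTof (tri f g ` Reps) = tri f g ` dom f" using TT_tri Reps_sub Reps_cover by blast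
  have 1: "(\<Union>\<rho>\<in>GR m. \<Union>\<tau>\<in>tri f g ` Reps. {\<rho> (cornerAB c \<tau>)}) = cornerAB c ` TTof (tri f g ` Reps)"
    unfolding TTof_def by (rule unionGR) (rule cornerAB_equiv)
  have 2: "(\<Union>\<rho>\<in>GR m. \<Union>\<tau>\<in>tri f g ` Reps. {\<rho> (cornerBG c \<tau>)}) = cornerBG c ` TTof (tri f g ` Reps)"
    unfolding TTof_def by (rule unionGR) (rule cornerBG_equiv)
  have 3: "(\<Union>\<rho>\<in>GR m. \<Union>\<tau>\<in>tri f g ` Reps. {\<rho> (cornerAG \<tau>)}) = cornerAG ` TTof (tri f g ` Reps)"
    unfolding TTof_def by (rule unionGR) (rule cornerAG_equiv)
  have 4: "card (tri f g ` Reps) = k" "finite (tri f g ` Reps)"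
    using Reps_card tri_inj apply (simp add: card_image)
    using Reps_card(1) by (rule finite_imageI)
  have "triWitness m k c (liftAB c f) (liftBG c g) (liftAG (g \<circ>\<^sub>m f)) (tri f g ` Reps)"
    unfolding triWitness_def 1 2 3 4(1) TT lifts using 4(2) by simp
  then show ?thesis unfolding triConnected_def by blast
qed

end


context setting
begin

lemma c_nonint: "c t \<noteq> real_of_int n"
proof
  assume e: "c t = real_of_int n"
  have "2 * real_of_int t - 1 < real_of_int n" "real_of_int n < 2 * real_of_int t + 1"
    using beta_diag[rule_format, of t] e by auto
  then have "n = 2 * t" by linarith
  then show False using e beta_generic by auto
qed

lemma inTri:
  fixes s t h j :: int
  shows "(real_of_int j - 1/2, real_of_int j - 1/2) \<in> triRegion c (s, t, h) \<longleftrightarrow>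
         (s < j \<and> h < j \<and> j \<le> t) \<or> (j \<le> s \<and> j \<le> h \<and> t < j)"
proof -
  define C where "C = c t"
  define x0 where "x0 = real_of_int j - 1/2"
  define D where "D = C - real_of_int s - real_of_int h"
  have Cb: "2 * real_of_int t - 1 < C" "C < 2 * real_of_int t + 1" using beta_diag by (auto simp: C_def)
  have D0: "D \<noteq> 0" using c_nonint[of t "s + h"] by (auto simp: D_def C_def)
  have hull: "triRegion c (s, t, h) = {u *\<^sub>R (real_of_int s, C - real_of_int s) + v *\<^sub>R (C - real_of_int h, real_of_int h) + w *\<^sub>R (real_of_int s, real_of_int h) | u v w. 0 \<le> u \<and> 0 \<le> v \<and> 0 \<le> w \<and> u + v + w = 1}"
    unfolding triRegion_def cornerAB_def cornerBG_def cornerAG_def C_def by (simp add: convex_hull_3)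
  show ?thesis
  proof
    assume "(real_of_int j - 1/2, real_of_int j - 1/2) \<in> triRegion c (s, t, h)"
    then obtain u v w where uvw: "0 \<le> u" "0 \<le> v" "0 \<le> w" "u + v + w = 1"
      and p: "(x0, x0) = u *\<^sub>R (real_of_int s, C - real_of_int s) + v *\<^sub>R (C - real_of_int h, real_of_int h) + w *\<^sub>R (real_of_int s, real_of_int h)"
      unfolding hull x0_def by blast
    from p have e1: "x0 = u * s + v * (C - h) + w * s" and e2: "x0 = u * (C - s) + v * h + w * h" by auto
    have w: "w = 1 - u - v" using uvw by simp
    have q1: "x0 - s = v * D" using e1 unfolding w D_def by (simp add: algebra_simps)
    have q2: "x0 - h = u * D" using e2 unfolding w D_def by (simp add: algebra_simps)
    have q3: "C - 2 * x0 = w * D" using q1 q2 unfolding w D_def by (simp add: algebra_simps)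
    show "(s < j \<and> h < j \<and> j \<le> t) \<or> (j \<le> s \<and> j \<le> h \<and> t < j)"
    proof (cases "D > 0")
      case True
      then have r: "x0 - s \<ge> 0" "x0 - h \<ge> 0" "C - 2 * x0 \<ge> 0" using q1 q2 q3 uvw by simp_all
      have "real_of_int s < real_of_int j" "real_of_int h < real_of_int j" "real_of_int j < real_of_int t + 1"
        using Cb r x0_def by linarith+
      then show ?thesis by linarith
    next
      case False
      then have "D < 0" using D0 by simp
      then have r: "x0 - s \<le> 0" "x0 - h \<le> 0" "C - 2 * x0 \<le> 0" using q1 q2 q3 uvw
        by (simp_all add: mult_nonneg_nonpos)
      have "real_of_int s > real_of_int j - 1" "real_of_int h > real_of_int j - 1" "real_of_int t < real_of_int j"
        using Cb r x0_def by linarith+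
      then show ?thesis by linarith
    qed
  next
    assume a: "(s < j \<and> h < j \<and> j \<le> t) \<or> (j \<le> s \<and> j \<le> h \<and> t < j)"
    define u where "u = (x0 - h) / D"
    define v where "v = (x0 - s) / D"
    define w where "w = (C - 2 * x0) / D"
    have "u + v + w = ((x0 - h) + (x0 - s) + (C - 2 * x0)) / D"
      unfolding u_def v_def w_def using D0 by (simp add: field_simps)
    also have "\<dots> = D / D" by (simp add: D_def)
    finally have sum: "u + v + w = 1" using D0 by simp
    have nn: "0 \<le> u \<and> 0 \<le> v \<and> 0 \<le> w"
    proof (cases "s < j \<and> h < j \<and> j \<le> t")
      case True
      then have "real_of_int s \<le> real_of_int j - 1" "real_of_int h \<le> real_of_int j - 1" "real_of_int j \<le> real_of_int t" by simp_all
      then have "x0 - h > 0" "x0 - s > 0" "C - 2 * x0 > 0" "D > 0" using Cb x0_def D_def by linarith+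
      then show ?thesis unfolding u_def v_def w_def by simp
    next
      case False
      then have "j \<le> s" "j \<le> h" "t < j" using a by auto
      then have "real_of_int s \<ge> real_of_int j" "real_of_int h \<ge> real_of_int j" "real_of_int t \<le> real_of_int j - 1" by simp_all
      then have "x0 - h < 0" "x0 - s < 0" "C - 2 * x0 < 0" "D < 0" using Cb x0_def D_def by linarith+
      then show ?thesis unfolding u_def v_def w_def by (simp add: divide_nonpos_neg)
    qed
    have uD: "u * D = x0 - h" and vD: "v * D = x0 - s" using D0 unfolding u_def v_def by simp_all
    have w': "w = 1 - u - v" using sum by simp
    have "u * s + v * (C - h) + w * s = s + v * D" "u * (C - s) + v * h + w * h = h + u * D"
      unfolding w' D_def by (simp_all add: algebra_simps)
    then have "u * s + v * (C - h) + w * s = x0" "u * (C - s) + v * h + w * h = x0"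
      using uD vD by simp_all
    then have "(x0, x0) = u *\<^sub>R (real_of_int s, C - real_of_int s) + v *\<^sub>R (C - real_of_int h, real_of_int h) + w *\<^sub>R (real_of_int s, real_of_int h)"
      by simp
    then show "(real_of_int j - 1/2, real_of_int j - 1/2) \<in> triRegion c (s, t, h)"
      unfolding hull x0_def using nn sum by blast
  qed
qed


lemma ract_affine: "\<exists>a e. ract m \<sigma> = (\<lambda>x. a + e *\<^sub>R x)"
proof (cases "fst \<sigma>")
  case True
  have "ract m \<sigma> = (\<lambda>x. (1 + of_int (snd \<sigma> * dd m), 1 + of_int (snd \<sigma> * dd m)) + (-1) *\<^sub>R x)"
    by (rule ext) (simp add: ract_def True prod_eq_iff)
  then show ?thesis by blast
next
  case False
  have "ract m \<sigma> = (\<lambda>x. (of_int (snd \<sigma> * dd m), of_int (snd \<sigma> * dd m)) + 1 *\<^sub>R x)"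
    by (rule ext) (simp add: ract_def False prod_eq_iff)
  then show ?thesis by blast
qed

lemma ract_triRegion: "ract m \<sigma> ` triRegion c \<tau> = triRegion c (act3 m \<sigma> \<tau>)"
proof -
  obtain a e where r: "ract m \<sigma> = (\<lambda>x. a + e *\<^sub>R x)" using ract_affine by blast
  have "ract m \<sigma> ` triRegion c \<tau> = convex hull (ract m \<sigma> ` {cornerAB c \<tau>, cornerBG c \<tau>, cornerAG \<tau>})"
    unfolding triRegion_def r by (rule convex_hull_affinity[symmetric])
  also have "ract m \<sigma> ` {cornerAB c \<tau>, cornerBG c \<tau>, cornerAG \<tau>} = {cornerAB c (act3 m \<sigma> \<tau>), cornerBG c (act3 m \<sigma> \<tau>), cornerAG (act3 m \<sigma> \<tau>)}"
    by (simp add: cornerAB_equiv cornerBG_equiv cornerAG_equiv)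
  finally show ?thesis unfolding triRegion_def .
qed

end


definition crossZ :: "int \<Rightarrow> int \<Rightarrow> int \<Rightarrow> bool" where
  "crossZ j x y \<longleftrightarrow> (x < j \<and> j \<le> y) \<or> (j \<le> x \<and> y < j)"

lemma wt_eq: "wt j F = real (card {i\<in>dom F. crossZ j i (the (F i))}) / 2"
proof -
  have "\<And>i. ((real_of_int i < real_of_int j - 1/2 \<and> real_of_int j - 1/2 < real_of_int (the (F i))) \<or>
      (real_of_int i > real_of_int j - 1/2 \<and> real_of_int j - 1/2 > real_of_int (the (F i)))) \<longleftrightarrow> crossZ j i (the (F i))"
    unfolding crossZ_def by linarith
  then show ?thesis unfolding wt_def by simp
qed

lemma card_sum_bool:
  assumes "finite F" shows "real (card {s\<in>F. P s}) = (\<Sum>s\<in>F. if P s then 1 else 0)"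
proof -
  have "real (card {s\<in>F. P s}) = (\<Sum>s\<in>{s\<in>F. P s}. 1)" by simp
  also have "\<dots> = (\<Sum>s\<in>F. if P s then 1 else 0)" using assms by (rule sum.inter_filter)
  finally show ?thesis .
qed

locale setting3 = setting2 +
  fixes Tri assumes W: "triWitness m k c (liftAB c f) (liftBG c g) (liftAG (g \<circ>\<^sub>m f)) Tri"
begin

lemma Tri_TT: "Tri \<subseteq> TTof Tri"
proof
  fix \<tau> assume "\<tau> \<in> Tri"
  moreover have "\<tau> = act3 m (False, 0) \<tau>" by (cases \<tau>) (simp add: act3_def zact_id)
  ultimately show "\<tau> \<in> TTof Tri" unfolding TTof_def by blast
qed

lemma Tri_form: "\<tau> \<in> Tri \<Longrightarrow> fst \<tau> \<in> dom f \<and> \<tau> = tri f g (fst \<tau>)"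
proof -
  assume "\<tau> \<in> Tri"
  then have t: "\<tau> \<in> TTof Tri" using Tri_TT by blast
  obtain s t h where e: "\<tau> = (s, t, h)" by (cases \<tau>)
  then have "f s = Some t \<and> g t = Some h" using witness_props(1)[OF W] t by blast
  then have "tri f g s = (s, t, h)" by (simp add: tri_def)
  then show ?thesis using e \<open>f s = Some t \<and> g t = Some h\<close> by auto
qed

definition R' :: "int set" where "R' = fst ` Tri"

lemma Tri_eq: "Tri = tri f g ` R'"
proof
  show "Tri \<subseteq> tri f g ` R'"
  proof
    fix \<tau> assume a: "\<tau> \<in> Tri"
    then have "\<tau> = tri f g (fst \<tau>)" using Tri_form by blast
    moreover have "fst \<tau> \<in> R'" using a unfolding R'_def by blast
    ultimately show "\<tau> \<in> tri f g ` R'" by blast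
  qed
  show "tri f g ` R' \<subseteq> Tri"
  proof
    fix x assume "x \<in> tri f g ` R'"
    then obtain \<tau> where a: "\<tau> \<in> Tri" "x = tri f g (fst \<tau>)" unfolding R'_def by blast
    then have "\<tau> = tri f g (fst \<tau>)" using Tri_form by blast
    then show "x \<in> Tri" using a by simp
  qed
qed

lemma R'_sub: "R' \<subseteq> dom f"
proof
  fix r assume "r \<in> R'"
  then obtain \<tau> where "\<tau> \<in> Tri" "r = fst \<tau>" unfolding R'_def by blast
  then show "r \<in> dom f" using Tri_form by blast
qed

lemma R'_card: "finite R'" "card R' = k"
proof -
  have fin: "finite Tri" "card Tri = k" using W unfolding triWitness_def by auto
  have "inj_on fst Tri"
  proof (rule inj_onI)
    fix x y assume "x \<in> Tri" "y \<in> Tri" "fst x = fst y"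
    then show "x = y" using Tri_form[of x] Tri_form[of y] by metis
  qed
  then show "finite R'" "card R' = k" using fin unfolding R'_def by (auto simp: card_image)
qed

lemma R'_cover: "\<forall>s\<in>dom f. \<exists>\<sigma>. \<exists>r\<in>R'. s = zact m \<sigma> r"
proof
  fix s assume "s \<in> dom f"
  then obtain t where "f s = Some t" by auto
  then obtain h where "(s, t, h) \<in> TTof Tri" using witness_props(2)[OF W] by blast
  then obtain \<sigma> \<tau> where st: "\<tau> \<in> Tri" "(s, t, h) = act3 m \<sigma> \<tau>" unfolding TTof_def by blast
  then have "s = zact m \<sigma> (fst \<tau>)" by (cases \<tau>) (simp add: act3_def)
  moreover have "fst \<tau> \<in> R'" using st(1) by (simp add: R'_def)
  ultimately show "\<exists>\<sigma>. \<exists>r\<in>R'. s = zact m \<sigma> r" by blast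
qed

lemma R'_orbits: "Gorbit m ` R' = Gorbit m ` dom f"
proof
  show "Gorbit m ` R' \<subseteq> Gorbit m ` dom f" using R'_sub by blast
  show "Gorbit m ` dom f \<subseteq> Gorbit m ` R'"
  proof
    fix X assume "X \<in> Gorbit m ` dom f"
    then obtain s where s: "s \<in> dom f" "X = Gorbit m s" by blast
    then obtain \<sigma> r where "r \<in> R'" "s = zact m \<sigma> r" using R'_cover by blast
    then show "X \<in> Gorbit m ` R'" using s Gorbit_zact by auto
  qed
qed

lemma R'_distinct: "r \<in> R' \<Longrightarrow> r' \<in> R' \<Longrightarrow> r' = zact m \<sigma> r \<Longrightarrow> r' = r"
proof -
  assume a: "r \<in> R'" "r' \<in> R'" "r' = zact m \<sigma> r"
  have "card (Gorbit m ` R') = card R'" using R'_orbits orbits_fin R'_card by simp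
  then have "inj_on (Gorbit m) R'" using R'_card(1) inj_on_iff_eq_card by blast
  moreover have "Gorbit m r' = Gorbit m r" using a(3) Gorbit_zact by simp
  ultimately show "r' = r" using a by (meson inj_onD)
qed

lemma f_inj: "inj_on (\<lambda>s. the (f s)) (dom f)"
proof (rule inj_onI)
  fix s s' assume a: "s \<in> dom f" "s' \<in> dom f" "the (f s) = the (f s')"
  have "\<forall>x\<in>dom f. \<forall>y\<in>dom f. Gorbit m (the (f x)) = Gorbit m (the (f y)) \<longrightarrow> Gorbit m x = Gorbit m y"
    using Lf unfolding LPP_def by blast
  then have "Gorbit m s' = Gorbit m s" using a by metis
  then obtain \<sigma> where \<sigma>: "s' = zact m \<sigma> s" using Gorbit_eq_iff by blast
  then have "the (f s') = zact m \<sigma> (the (f s))" using LPP_equiv(2)[OF Lf a(1)] by simp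
  then have "zact m \<sigma> (the (f s)) = zact m (False, 0) (the (f s))" using a(3) zact_id by simp
  then have "\<sigma> = (False, 0)" using zact_inj m2 by blast
  then show "s = s'" using \<sigma> zact_id by simp
qed

end


context setting3
begin

definition aP :: "int \<Rightarrow> int \<Rightarrow> bool" where "aP j s = crossZ j s (the (f s))"
definition bP :: "int \<Rightarrow> int \<Rightarrow> bool" where "bP j s = crossZ j (the (f s)) (the (g (the (f s))))"
definition eP :: "int \<Rightarrow> int \<Rightarrow> bool" where "eP j s = crossZ j s (the (g (the (f s))))"
definition nP :: "int \<Rightarrow> int \<Rightarrow> bool" where
  "nP j s = ((real_of_int j - 1/2, real_of_int j - 1/2) \<in> triRegion c (tri f g s))"

lemma nP_eq: "nP j s \<longleftrightarrow> (s < j \<and> the (g (the (f s))) < j \<and> j \<le> the (f s)) \<or> (j \<le> s \<and> j \<le> the (g (the (f s))) \<and> the (f s) < j)"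
  unfolding nP_def tri_def by (rule inTri)

lemma pointwise: "(if aP j s then 1 else 0) + (if bP j s then 1 else 0) = (if eP j s then 1 else 0) + 2 * (if nP j s then 1 else (0::real))"
  unfolding nP_eq aP_def bP_def eP_def crossZ_def by auto

lemma nP_ab: "nP j s \<Longrightarrow> aP j s \<or> bP j s"
  unfolding nP_eq aP_def bP_def crossZ_def by auto

lemma eP_ab: "eP j s \<Longrightarrow> aP j s \<or> bP j s"
  unfolding eP_def aP_def bP_def crossZ_def by auto

lemma wt_f: "wt j f = real (card {s\<in>dom f. aP j s}) / 2"
  unfolding wt_eq aP_def ..

lemma dom_g_img: "dom g = (\<lambda>s. the (f s)) ` dom f"
  using dg by (force simp: ran_def)

lemma wt_g: "wt j g = real (card {s\<in>dom f. bP j s}) / 2"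
proof -
  have "{t\<in>dom g. crossZ j t (the (g t))} = (\<lambda>s. the (f s)) ` {s\<in>dom f. bP j s}"
    unfolding dom_g_img bP_def by auto
  moreover have "inj_on (\<lambda>s. the (f s)) {s\<in>dom f. bP j s}"
    using f_inj by (rule inj_on_subset) auto
  ultimately have "card {t\<in>dom g. crossZ j t (the (g t))} = card {s\<in>dom f. bP j s}"
    by (simp add: card_image)
  then show ?thesis unfolding wt_eq by simp
qed

lemma wt_gf: "wt j (g \<circ>\<^sub>m f) = real (card {s\<in>dom f. eP j s}) / 2"
proof -
  have "\<And>s. s \<in> dom f \<Longrightarrow> (g \<circ>\<^sub>m f) s = g (the (f s))" by (auto simp: map_comp_def)
  then have "{i\<in>dom (g \<circ>\<^sub>m f). crossZ j i (the ((g \<circ>\<^sub>m f) i))} = {s\<in>dom f. eP j s}"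
    unfolding dom_comp eP_def by auto
  then show ?thesis unfolding wt_eq by simp
qed

lemma fin_ab: "finite {s\<in>dom f. aP j s \<or> bP j s}"
proof -
  define M where "M r = \<bar>the (f r) - r\<bar> + \<bar>the (g (the (f r))) - the (f r)\<bar>" for r
  have "{s\<in>dom f. aP j s \<or> bP j s} \<subseteq> (\<Union>r\<in>R'. {j - M r .. j + M r})"
  proof
    fix s assume s: "s \<in> {s\<in>dom f. aP j s \<or> bP j s}"
    then obtain \<sigma> r where r: "r \<in> R'" "s = zact m \<sigma> r" using R'_cover by blast
    have rd: "r \<in> dom f" using r(1) R'_sub by blast
    have fs: "the (f s) = zact m \<sigma> (the (f r))" using LPP_equiv(2)[OF Lf rd] r(2) by simp
    have gfs: "the (g (the (f s))) = zact m \<sigma> (the (g (the (f r))))"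
      using LPP_equiv(2)[OF Lg fdom_g[OF rd]] fs by simp
    have d1: "\<bar>the (f s) - s\<bar> = \<bar>the (f r) - r\<bar>" using fs r(2) zact_dist by simp
    have d2: "\<bar>the (g (the (f s))) - the (f s)\<bar> = \<bar>the (g (the (f r))) - the (f r)\<bar>" using fs gfs zact_dist by simp
    have "\<bar>s - j\<bar> \<le> M r" using s d1 d2 unfolding M_def aP_def bP_def crossZ_def by auto
    then have "s \<in> {j - M r .. j + M r}" by auto
    then show "s \<in> (\<Union>r\<in>R'. {j - M r .. j + M r})" using r(1) by blast
  qed
  moreover have "finite (\<Union>r\<in>R'. {j - M r .. j + M r})" using R'_card(1) by auto
  ultimately show ?thesis by (rule finite_subset)
qed

lemma fin_P: "(\<And>s. P s \<Longrightarrow> aP j s \<or> bP j s) \<Longrightarrow> finite {s\<in>dom f. P s}"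
  by (rule finite_subset[OF _ fin_ab[of j]]) auto

end


context setting3
begin

lemma GR_count: "r \<in> dom f \<Longrightarrow>
  card {\<rho>\<in>GR m. (real_of_int j - 1/2, real_of_int j - 1/2) \<in> \<rho> ` triRegion c (tri f g r)}
  = card ((\<lambda>\<sigma>. zact m \<sigma> r) ` {\<sigma>. nP j (zact m \<sigma> r)})"
proof -
  assume r: "r \<in> dom f"
  have "{\<rho>\<in>GR m. (real_of_int j - 1/2, real_of_int j - 1/2) \<in> \<rho> ` triRegion c (tri f g r)}
      = ract m ` {\<sigma>. nP j (zact m \<sigma> r)}"
  proof -
    have key: "\<And>\<sigma>. ract m \<sigma> ` triRegion c (tri f g r) = triRegion c (tri f g (zact m \<sigma> r))"
      using ract_triRegion tri_equiv[OF r] by simp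
    have "{\<rho>\<in>range (ract m). (real_of_int j - 1/2, real_of_int j - 1/2) \<in> \<rho> ` triRegion c (tri f g r)}
       = ract m ` {\<sigma>. (real_of_int j - 1/2, real_of_int j - 1/2) \<in> ract m \<sigma> ` triRegion c (tri f g r)}"
      by blast
    then show ?thesis unfolding GR_char nP_def key .
  qed
  moreover have "inj_on (ract m) {\<sigma>. nP j (zact m \<sigma> r)}"
    using ract_inj m2 by (meson inj_onI)
  moreover have "inj_on (\<lambda>\<sigma>. zact m \<sigma> r) {\<sigma>. nP j (zact m \<sigma> r)}"
    using zact_inj m2 by (meson inj_onI)
  ultimately show ?thesis by (simp add: card_image)
qed

lemma S_sub: "r \<in> R' \<Longrightarrow> (\<lambda>\<sigma>. zact m \<sigma> r) ` {\<sigma>. nP j (zact m \<sigma> r)} \<subseteq> {s\<in>dom f. nP j s}"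
proof
  fix x assume r: "r \<in> R'" and "x \<in> (\<lambda>\<sigma>. zact m \<sigma> r) ` {\<sigma>. nP j (zact m \<sigma> r)}"
  then obtain \<sigma> where x: "x = zact m \<sigma> r" "nP j (zact m \<sigma> r)" by blast
  have "r \<in> dom f" using r R'_sub by blast
  then have "x \<in> dom f" using x(1) LPP_equiv(1)[OF Lf] by blast
  then show "x \<in> {s\<in>dom f. nP j s}" using x by blast
qed

lemma multO_eq: "real (multO m c Tri i) = real (card {s\<in>dom f. nP (int i) s})"
proof -
  define j where "j = int i"
  define S where "S r = (\<lambda>\<sigma>. zact m \<sigma> r) ` {\<sigma>. nP j (zact m \<sigma> r)}" for r
  define G where "G \<tau> = card {\<rho>\<in>GR m. (real_of_int j - 1/2, real_of_int j - 1/2) \<in> \<rho> ` triRegion c \<tau>}" for \<tau>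
  have pt: "(real i - 1/2, real i - 1/2) = (real_of_int j - 1/2, real_of_int j - 1/2)" by (simp add: j_def)
  have finN: "finite {s\<in>dom f. nP j s}" by (rule fin_P) (rule nP_ab)
  have "multO m c Tri i = sum G Tri"
    unfolding multO_def pt G_def ..
  also have "\<dots> = sum G (tri f g ` R')" by (rule arg_cong[OF Tri_eq])
  also have "\<dots> = sum (G \<circ> tri f g) R'" by (rule sum.reindex[OF tri_inj])
  also have "\<dots> = (\<Sum>r\<in>R'. card (S r))"
  proof (rule sum.cong)
    fix r assume "r \<in> R'"
    then have "r \<in> dom f" using R'_sub by blast
    then show "(G \<circ> tri f g) r = card (S r)" unfolding S_def G_def comp_def by (rule GR_count)
  qed simp
  also have "\<dots> = card (\<Union>r\<in>R'. S r)"
  proof (rule card_UN_disjoint[symmetric])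
    show "finite R'" by (rule R'_card(1))
    show "\<forall>r\<in>R'. finite (S r)"
    proof
      fix r assume "r \<in> R'"
      then have "S r \<subseteq> {s\<in>dom f. nP j s}" unfolding S_def by (rule S_sub)
      then show "finite (S r)" using finN by (rule finite_subset)
    qed
    show "\<forall>r\<in>R'. \<forall>r'\<in>R'. r \<noteq> r' \<longrightarrow> S r \<inter> S r' = {}"
    proof (intro ballI impI)
      fix r r' assume rr: "r \<in> R'" "r' \<in> R'" "r \<noteq> r'"
      show "S r \<inter> S r' = {}"
      proof (rule ccontr)
        assume "S r \<inter> S r' \<noteq> {}"
        then obtain x where "x \<in> S r" "x \<in> S r'" by blast
        then obtain \<sigma> \<sigma>' where "x = zact m \<sigma> r" "x = zact m \<sigma>' r'" unfolding S_def by blast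
        then have e: "zact m \<sigma> r = zact m \<sigma>' r'" by simp
        have "r' = zact m (zinv \<sigma>') (zact m \<sigma>' r')" by (simp add: zact_inv)
        also have "\<dots> = zact m (zcomp (zinv \<sigma>') \<sigma>) r" by (simp only: e[symmetric] zact_comp)
        finally have "r' = r" using R'_distinct rr(1,2) by blast
        then show False using rr(3) by simp
      qed
    qed
  qed
  also have "(\<Union>r\<in>R'. S r) = {s\<in>dom f. nP j s}"
  proof
    show "(\<Union>r\<in>R'. S r) \<subseteq> {s\<in>dom f. nP j s}"
    proof
      fix x assume "x \<in> (\<Union>r\<in>R'. S r)"
      then obtain r where r: "r \<in> R'" "x \<in> S r" by blast
      then show "x \<in> {s\<in>dom f. nP j s}" using S_sub[OF r(1), of j] unfolding S_def by blast
    qed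
    show "{s\<in>dom f. nP j s} \<subseteq> (\<Union>r\<in>R'. S r)"
    proof
      fix s assume s: "s \<in> {s\<in>dom f. nP j s}"
      then obtain \<sigma> r where r: "r \<in> R'" "s = zact m \<sigma> r" using R'_cover by blast
      then have "s \<in> S r" using s unfolding S_def by blast
      then show "s \<in> (\<Union>r\<in>R'. S r)" using r(1) by blast
    qed
  qed
  finally show ?thesis unfolding j_def by simp
qed

lemma weight: "wt (int i) f + wt (int i) g = wt (int i) (g \<circ>\<^sub>m f) + real (multO m c Tri i)"
proof -
  define j where "j = int i"
  define F where "F = {s\<in>dom f. aP j s \<or> bP j s}"
  have finF: "finite F" unfolding F_def by (rule fin_ab)
  have sub: "\<And>P. (\<And>s. P s \<Longrightarrow> aP j s \<or> bP j s) \<Longrightarrow> {s\<in>dom f. P s} = {s\<in>F. P s}"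
    unfolding F_def by auto
  have A: "real (card {s\<in>dom f. aP j s}) = (\<Sum>s\<in>F. if aP j s then 1 else 0)"
    using sub[of "aP j"] card_sum_bool[OF finF] by simp
  have B: "real (card {s\<in>dom f. bP j s}) = (\<Sum>s\<in>F. if bP j s then 1 else 0)"
    using sub[of "bP j"] card_sum_bool[OF finF] by simp
  have E: "real (card {s\<in>dom f. eP j s}) = (\<Sum>s\<in>F. if eP j s then 1 else 0)"
    using sub[of "eP j"] eP_ab card_sum_bool[OF finF] by simp
  have N: "real (card {s\<in>dom f. nP j s}) = (\<Sum>s\<in>F. if nP j s then 1 else 0)"
    using sub[of "nP j"] nP_ab card_sum_bool[OF finF] by simp
  have "(\<Sum>s\<in>F. if aP j s then 1 else 0) + (\<Sum>s\<in>F. if bP j s then 1 else 0)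
      = (\<Sum>s\<in>F. if eP j s then 1 else 0) + 2 * (\<Sum>s\<in>F. if nP j s then 1 else (0::real))"
    by (simp add: sum.distrib[symmetric] sum_distrib_left pointwise)
  then show ?thesis
    unfolding wt_f wt_g wt_gf multO_eq using A B E N unfolding j_def by simp
qed

end


lemma map_eqI_some: "(\<And>s t. f s = Some t \<longleftrightarrow> f' s = Some t) \<Longrightarrow> f = (f' :: 'a \<Rightarrow> 'b option)"
proof
  fix s assume a: "\<And>s t. f s = Some t \<longleftrightarrow> f' s = Some t"
  show "f s = f' s"
  proof (cases "f s")
    case None
    then show ?thesis using a by (metis option.exhaust)
  next
    case (Some t)
    then show ?thesis using a by metis
  qed
qed

context setting
begin

lemma liftAB_inj: "liftAB c f = liftAB c f' \<Longrightarrow> f = f'"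
  by (rule map_eqI_some) (metis memAB)

lemma liftBG_inj: "liftBG c g = liftBG c g' \<Longrightarrow> g = g'"
  by (rule map_eqI_some) (metis memBG)

end

theorem mainTheorem8:
  fixes m k :: nat and c :: "int \<Rightarrow> real"
  assumes "0 < k" and "k < m"
    and beta_diag: "\<forall>l. 2 * real_of_int l - 1 < c l \<and> c l < 2 * real_of_int l + 1"
    and beta_generic: "\<forall>s l. c l \<noteq> 2 * real_of_int s"
    and beta_inv: "\<forall>\<rho>\<in>GR m. \<forall>l. \<exists>l'. \<rho> ` betaL c l = betaL c l'"
  shows "bij_betw (\<lambda>(f, g). (liftAB c f, liftBG c g, liftAG (g \<circ>\<^sub>m f)))
           {(f, g). LPP m k f \<and> LPP m k g \<and> dom g = ran f \<and> LPP m k (g \<circ>\<^sub>m f)}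
           {(x, y, z). x \<in> statesAB m k c \<and> y \<in> statesBG m k c \<and> z \<in> statesAG m k \<and>
                       triConnected m k c x y z}
    \<and> (\<forall>f g Tri. LPP m k f \<and> LPP m k g \<and> dom g = ran f \<and> LPP m k (g \<circ>\<^sub>m f) \<and>
          triWitness m k c (liftAB c f) (liftBG c g) (liftAG (g \<circ>\<^sub>m f)) Tri \<longrightarrow>
          (\<forall>i\<in>{1..m}. wt (int i) f + wt (int i) g
                        = wt (int i) (g \<circ>\<^sub>m f) + real (multO m c Tri i)))"
proof -
  have m2: "2 \<le> m" using assms(1,2) by simp
  interpret S: setting m c using m2 beta_diag beta_generic beta_inv by unfold_locales
  define Phi where "Phi = (\<lambda>(f, g). (liftAB c f, liftBG c g, liftAG (g \<circ>\<^sub>m f)))"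
  define Dm where "Dm = {(f, g). LPP m k f \<and> LPP m k g \<and> dom g = ran f \<and> LPP m k (g \<circ>\<^sub>m f)}"
  define Tg where "Tg = {(x, y, z). x \<in> statesAB m k c \<and> y \<in> statesBG m k c \<and> z \<in> statesAG m k \<and>
                       triConnected m k c x y z}"
  have inj: "inj_on Phi Dm"
  proof (rule inj_onI)
    fix p q assume "p \<in> Dm" "q \<in> Dm" "Phi p = Phi q"
    obtain f g f' g' where pq: "p = (f, g)" "q = (f', g')" by (cases p; cases q)
    then have "liftAB c f = liftAB c f'" "liftBG c g = liftBG c g'" using \<open>Phi p = Phi q\<close> by (simp_all add: Phi_def)
    then show "p = q" using pq S.liftAB_inj S.liftBG_inj by simp
  qed
  have sub: "Phi ` Dm \<subseteq> Tg"
  proof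
    fix x assume "x \<in> Phi ` Dm"
    then obtain f g where fg: "(f, g) \<in> Dm" "x = Phi (f, g)" by auto
    then have L: "LPP m k f" "LPP m k g" "dom g = ran f" "LPP m k (g \<circ>\<^sub>m f)" by (auto simp: Dm_def)
    interpret S2: setting2 m c k f g using L assms(1) by unfold_locales
    have "triConnected m k c (liftAB c f) (liftBG c g) (liftAG (g \<circ>\<^sub>m f))" by (rule S2.forward)
    moreover have "x = (liftAB c f, liftBG c g, liftAG (g \<circ>\<^sub>m f))" using fg(2) by (simp add: Phi_def)
    moreover have "liftAB c f \<in> statesAB m k c" "liftBG c g \<in> statesBG m k c" "liftAG (g \<circ>\<^sub>m f) \<in> statesAG m k"
      using L unfolding statesAB_def statesBG_def statesAG_def by blast+
    ultimately show "x \<in> Tg" unfolding Tg_def by simp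
  qed
  have sup: "Tg \<subseteq> Phi ` Dm"
  proof
    fix w assume "w \<in> Tg"
    then obtain x y z where w: "w = (x, y, z)" "x \<in> statesAB m k c" "y \<in> statesBG m k c" "z \<in> statesAG m k"
      "triConnected m k c x y z" unfolding Tg_def by blast
    obtain f where f: "LPP m k f" "x = liftAB c f" using w(2) unfolding statesAB_def by blast
    obtain g where g: "LPP m k g" "y = liftBG c g" using w(3) unfolding statesBG_def by blast
    obtain h where h: "LPP m k h" "z = liftAG h" using w(4) unfolding statesAG_def by blast
    obtain Tri where T: "triWitness m k c (liftAB c f) (liftBG c g) (liftAG h) Tri"
      using w(5) f g h unfolding triConnected_def by blast
    have e: "dom g = ran f" "h = g \<circ>\<^sub>m f" using S.witness_comp[OF T] by simp_all
    then have "(f, g) \<in> Dm" using f g h unfolding Dm_def by simp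
    moreover have "w = Phi (f, g)" using w(1) f g h e unfolding Phi_def by simp
    ultimately show "w \<in> Phi ` Dm" by blast
  qed
  have part1: "bij_betw Phi Dm Tg" unfolding bij_betw_def using inj sub sup by blast
  have part2: "\<forall>f g Tri. LPP m k f \<and> LPP m k g \<and> dom g = ran f \<and> LPP m k (g \<circ>\<^sub>m f) \<and>
          triWitness m k c (liftAB c f) (liftBG c g) (liftAG (g \<circ>\<^sub>m f)) Tri \<longrightarrow>
          (\<forall>i\<in>{1..m}. wt (int i) f + wt (int i) g
                        = wt (int i) (g \<circ>\<^sub>m f) + real (multO m c Tri i))"
  proof (intro allI impI ballI)
    fix f g Tri i
    assume a: "LPP m k f \<and> LPP m k g \<and> dom g = ran f \<and> LPP m k (g \<circ>\<^sub>m f) \<and>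
          triWitness m k c (liftAB c f) (liftBG c g) (liftAG (g \<circ>\<^sub>m f)) Tri"
    interpret S3: setting3 m c k f g Tri using a assms(1) by unfold_locales auto
    show "wt (int i) f + wt (int i) g = wt (int i) (g \<circ>\<^sub>m f) + real (multO m c Tri i)"
      by (rule S3.weight)
  qed
  show ?thesis using part1 part2 unfolding Phi_def Dm_def Tg_def by blast
qed


end
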